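(* Let $h,w\ge 4$ and $G=C_w(U)\sqcap C_h$ with $U=\{i,j\}$, $i\ne j$. (1) If $i$ and $j$ are adjacent in $C_w$, then $Z(G)\le h$. (2) If $i$ and $j$ are not adjacent in $C_w$, then $Z(G)\le 2h$.
   Context: All graphs are finite, simple and undirected. Zero forcing: given a graph $G$ and a set $S\subseteq V(G)$ of initially filled vertices, the color change rule says that if a filled vertex $v$ has exactly one unfilled neighbor $u$, then $v$ forces $u$ to become filled. $S$ is a zero forcing set if repeatedly applying this rule eventually fills every vertex of $G$. The zero forcing number $Z(G)$ is the minimum cardinality of a zero forcing set of $G$. The cycle $C_n$ ($n\ge3$) has vertex set $\{1,\dots,n\}$ and edges $\{k,k+1\}$ for $1\le k\le n-1$ together with $\{n,1\}$. Generalized hierarchical product: for graphs $W,H$ and $U\subseteq V(W)$ (the root set), $W(U)\sqcap H$ is the graph with vertex set $V(W)\times V(H)$ in which $(x_1,y_1)$ and $(x_2,y_2)$ are adjacent iff either ($x_1=x_2\in U$ and $y_1y_2\in E(H)$) or ($y_1=y_2$ and $x_1x_2\in E(W)$). *)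

theory Defs
  imports Main
begin

record 'a graph =
  verts :: "'a set"
  adj :: "'a \<Rightarrow> 'a \<Rightarrow> bool"

definition simple_graph :: "'a graph \<Rightarrow> bool" where
  "simple_graph G \<longleftrightarrow> finite (verts G) \<and>
     (\<forall>x y. adj G x y \<longrightarrow> x \<in> verts G \<and> y \<in> verts G \<and> x \<noteq> y \<and> adj G y x)"

definition cycle_graph :: "nat \<Rightarrow> nat graph" where
  "cycle_graph n = \<lparr> verts = {1..n},
     adj = (\<lambda>x y. x \<in> {1..n} \<and> y \<in> {1..n} \<and>
                 (y = x + 1 \<or> x = y + 1 \<or> (x = n \<and> y = 1) \<or> (x = 1 \<and> y = n))) \<rparr>"

definition hier_prod :: "'a graph \<Rightarrow> 'a set \<Rightarrow> 'b graph \<Rightarrow> ('a \<times> 'b) graph" where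
  "hier_prod W U H = \<lparr> verts = verts W \<times> verts H,
     adj = (\<lambda>(x1, y1) (x2, y2). x1 \<in> verts W \<and> x2 \<in> verts W \<and> y1 \<in> verts H \<and> y2 \<in> verts H \<and>
              ((x1 = x2 \<and> x1 \<in> U \<and> adj H y1 y2) \<or> (y1 = y2 \<and> adj W x1 x2))) \<rparr>"

inductive_set filled :: "'a graph \<Rightarrow> 'a set \<Rightarrow> 'a set" for G S where
  init: "v \<in> S \<Longrightarrow> v \<in> filled G S"
| force: "v \<in> filled G S \<Longrightarrow> adj G v u \<Longrightarrow>
          (\<forall>w. adj G v w \<and> w \<noteq> u \<longrightarrow> w \<in> filled G S) \<Longrightarrow> u \<in> filled G S"

definition zero_forcing_set :: "'a graph \<Rightarrow> 'a set \<Rightarrow> bool" where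
  "zero_forcing_set G S \<longleftrightarrow> S \<subseteq> verts G \<and> verts G \<subseteq> filled G S"

definition zero_forcing_number :: "'a graph \<Rightarrow> nat" where
  "zero_forcing_number G = Min (card ` {S. zero_forcing_set G S})"

end

theory Submission imports Defs begin

definition cc :: "nat \<Rightarrow> nat \<Rightarrow> nat \<Rightarrow> nat" where
  "cc a w k = (if k < a then a - k else a + w - k)"
definition nx :: "nat \<Rightarrow> nat \<Rightarrow> nat" where "nx w x = (if x = w then 1 else x + 1)"
definition pv :: "nat \<Rightarrow> nat \<Rightarrow> nat" where "pv w x = (if x = 1 then w else x - 1)"

lemma adjC: "adj (cycle_graph n) x y \<longleftrightarrow> x \<in> {1..n} \<and> y \<in> {1..n} \<and>
                 (y = x + 1 \<or> x = y + 1 \<or> (x = n \<and> y = 1) \<or> (x = 1 \<and> y = n))"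
  by (simp add: cycle_graph_def)
lemma adjC2: "adj (cycle_graph w) x z \<longleftrightarrow> x \<in> {1..w} \<and> z \<in> {1..w} \<and> (z = nx w x \<or> z = pv w x)"
  unfolding adjC nx_def pv_def by auto
lemma nx_in: "x \<in> {1..w} \<Longrightarrow> nx w x \<in> {1..w}" by (auto simp: nx_def)
lemma pv_in: "x \<in> {1..w} \<Longrightarrow> pv w x \<in> {1..w}" by (auto simp: pv_def)
lemma nx_pv: "x \<in> {1..w} \<Longrightarrow> nx w (pv w x) = x" by (auto simp: nx_def pv_def)
lemma pv_nx: "x \<in> {1..w} \<Longrightarrow> pv w (nx w x) = x" by (auto simp: nx_def pv_def)
lemma cc_suc: "a \<in> {1..w} \<Longrightarrow> k + 1 < w \<Longrightarrow> cc a w (k+1) = pv w (cc a w k)"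
  by (auto simp: cc_def pv_def)
lemma cc_0: "a \<in> {1..w} \<Longrightarrow> cc a w 0 = a" 
  by (auto simp: cc_def)
lemma cc_last: "a \<in> {1..w} \<Longrightarrow> w > 1 \<Longrightarrow> cc a w (w-1) = nx w a"
  by (auto simp: cc_def nx_def)
lemma cc_in: "a \<in> {1..w} \<Longrightarrow> k < w \<Longrightarrow> cc a w k \<in> {1..w}" by (auto simp: cc_def)
lemma cc_surj: "a \<in> {1..w} \<Longrightarrow> x \<in> {1..w} \<Longrightarrow> \<exists>k<w. x = cc a w k"
  by (rule exI[of _ "if x \<le> a then a - x else a + w - x"]) (auto simp: cc_def)
lemma cc_neq: "a \<in> {1..w} \<Longrightarrow> w \<ge> 4 \<Longrightarrow> 0 < k \<Longrightarrow> k < w - 1 \<Longrightarrow>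
   cc a w k \<noteq> cc a w 0 \<and> cc a w k \<noteq> cc a w (w-1) \<and> cc a w (k-1) \<noteq> cc a w (k+1)"
  unfolding cc_def by auto

lemma adjH: "adj (hier_prod W U H) (x1,y1) (x2,y2) \<longleftrightarrow> x1 \<in> verts W \<and> x2 \<in> verts W \<and> y1 \<in> verts H \<and> y2 \<in> verts H \<and>
              ((x1 = x2 \<and> x1 \<in> U \<and> adj H y1 y2) \<or> (y1 = y2 \<and> adj W x1 x2))"
  by (simp add: hier_prod_def)
lemma vertsC[simp]: "verts (cycle_graph n) = {1..n}" by (simp add: cycle_graph_def)
lemma vertsH[simp]: "verts (hier_prod W U H) = verts W \<times> verts H" by (simp add: hier_prod_def)

lemma zfn_le:
  assumes "zero_forcing_set G S" "finite (verts G)"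
  shows "zero_forcing_number G \<le> card S"
proof -
  have sub: "{S. zero_forcing_set G S} \<subseteq> Pow (verts G)"
    unfolding zero_forcing_set_def by blast
  have "finite (Pow (verts G))" using assms(2) by simp
  hence "finite {S. zero_forcing_set G S}" using sub finite_subset by blast
  hence fin: "finite (card ` {S. zero_forcing_set G S})" by (rule finite_imageI)
  have "card S \<in> card ` {S. zero_forcing_set G S}" using assms(1) by blast
  thus ?thesis unfolding zero_forcing_number_def using Min_le[OF fin] by blast
qed

lemma forceP: "v \<in> filled G S \<Longrightarrow> adj G v u \<Longrightarrow>
   (\<And>x' y'. adj G v (x',y') \<Longrightarrow> (x',y') \<noteq> u \<Longrightarrow> (x',y') \<in> filled G S) \<Longrightarrow> u \<in> filled G S"
proof -
  assume v: "v \<in> filled G S" and vu: "adj G v u"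
    and H: "\<And>x' y'. adj G v (x',y') \<Longrightarrow> (x',y') \<noteq> u \<Longrightarrow> (x',y') \<in> filled G S"
  have "\<forall>q. adj G v q \<and> q \<noteq> u \<longrightarrow> q \<in> filled G S"
  proof (intro allI impI)
    fix q assume "adj G v q \<and> q \<noteq> u"
    then show "q \<in> filled G S" using H by (cases q) simp
  qed
  then show "u \<in> filled G S" using filled.force[OF v vu] by blast
qed

context
  fixes a w :: nat
  assumes a: "a \<in> {1..w}" and w: "w \<ge> 4"
begin

lemma cadj_gen: "x \<in> {1..w} \<Longrightarrow> adj (cycle_graph w) x z \<longleftrightarrow> z = nx w x \<or> z = pv w x"
  using adjC2[of w x z] nx_in[of x w] pv_in[of x w] by blast

lemma cadj_mid: assumes "0 < k" "k < w - 1"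
  shows "adj (cycle_graph w) (cc a w k) z \<longleftrightarrow> z = cc a w (k-1) \<or> z = cc a w (k+1)"
proof -
  have k1: "k - 1 + 1 = k" "k - 1 + 1 < w" "k + 1 < w" "k - 1 < w" "k < w" using assms by auto
  have e1: "cc a w (k+1) = pv w (cc a w k)" using cc_suc[OF a k1(3)] .
  have "cc a w k = pv w (cc a w (k-1))" using cc_suc[OF a k1(2)] unfolding k1(1) .
  hence e2: "nx w (cc a w k) = cc a w (k-1)" using nx_pv[OF cc_in[OF a k1(4)]] by simp
  show ?thesis unfolding cadj_gen[OF cc_in[OF a k1(5)]] e1 e2 by blast
qed

lemma cadj_0: "adj (cycle_graph w) (cc a w 0) z \<longleftrightarrow> z = cc a w 1 \<or> z = cc a w (w-1)"
proof -
  have w1: "0 + 1 < w" "1 < w" using w by auto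
  have e1: "cc a w 1 = pv w a" using cc_suc[OF a w1(1)] cc_0[OF a] by simp
  have e2: "cc a w (w-1) = nx w a" using cc_last[OF a w1(2)] .
  show ?thesis unfolding cc_0[OF a] cadj_gen[OF a] e1 e2 by blast
qed

lemma cadj_last: "adj (cycle_graph w) (cc a w (w-1)) z \<longleftrightarrow> z = cc a w (w-2) \<or> z = cc a w 0"
proof -
  have w1: "w - 2 + 1 = w - 1" "w - 2 + 1 < w" "w - 2 < w" "w - 1 < w" "1 < w" using w by auto
  have "cc a w (w-1) = pv w (cc a w (w-2))" using cc_suc[OF a w1(2)] unfolding w1(1) .
  hence e2: "nx w (cc a w (w-1)) = cc a w (w-2)" using nx_pv[OF cc_in[OF a w1(3)]] by simp
  have e3: "pv w (cc a w (w-1)) = cc a w 0" unfolding cc_last[OF a w1(5)] cc_0[OF a] using pv_nx[OF a] .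
  show ?thesis unfolding cadj_gen[OF cc_in[OF a w1(4)]] e2 e3 by blast
qed

lemma two_cols:
  fixes h :: nat and U :: "nat set"
  defines "G \<equiv> hier_prod (cycle_graph w) U (cycle_graph h)"
  defines "S \<equiv> {cc a w 0, cc a w 1} \<times> {1..h}"
  shows "zero_forcing_set G S"
proof -
  let ?c = "cc a w"
  let ?F = "filled G S"
  have P: "\<forall>k'\<le>k. \<forall>y\<in>{1..h}. (?c k', y) \<in> ?F" if "k < w" for k
    using that
  proof (induction k)
    case 0 then show ?case by (auto simp: S_def intro: filled.init)
  next
    case (Suc k)
    have IH: "\<forall>k'\<le>k. \<forall>y\<in>{1..h}. (?c k', y) \<in> ?F" using Suc by simp
    show ?case
    proof (cases "k = 0")
      case True then show ?thesis using IH by (auto simp: S_def le_Suc_eq intro: filled.init)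
    next
      case False
      have k: "0 < k" "k < w - 1" using False Suc.prems by auto
      have new: "(?c (Suc k), y) \<in> ?F" if y: "y \<in> {1..h}" for y
      proof (rule forceP[of "(?c k, y)"])
        show "(?c k, y) \<in> ?F" using IH y by simp
        show "adj G (?c k, y) (?c (Suc k), y)"
          unfolding G_def adjH using cadj_mid[OF k] cc_in[OF a, of k] cc_in[OF a, of "Suc k"] k y by auto
        fix x' y' assume ad: "adj G (?c k, y) (x', y')" and ne: "(x', y') \<noteq> (?c (Suc k), y)"
        from ad have "(x' = ?c k \<and> y' \<in> {1..h}) \<or> (y' = y \<and> adj (cycle_graph w) (?c k) x')"
          unfolding G_def adjH by auto
        thus "(x', y') \<in> ?F"
        proof
          assume "x' = ?c k \<and> y' \<in> {1..h}" thus ?thesis using IH by auto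
        next
          assume "y' = y \<and> adj (cycle_graph w) (?c k) x'"
          hence "y' = y" "x' = ?c (k-1) \<or> x' = ?c (k+1)" using cadj_mid[OF k] by auto
          thus ?thesis using ne IH y by auto
        qed
      qed
      show ?thesis using IH new by (auto simp: le_Suc_eq)
    qed
  qed
  show ?thesis unfolding zero_forcing_set_def
  proof
    show "S \<subseteq> verts G" unfolding S_def G_def using cc_in[OF a, of 0] cc_in[OF a, of 1] w by auto
    show "verts G \<subseteq> ?F"
    proof
      fix v assume "v \<in> verts G"
      then obtain x y where v: "v = (x,y)" "x \<in> {1..w}" "y \<in> {1..h}" unfolding G_def by auto
      then obtain k where "k < w" "x = ?c k" using cc_surj[OF a] by blast
      thus "v \<in> ?F" using P[of k] v by auto
    qed
  qed
qed


lemma adj_case: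
  fixes h :: nat
  assumes h: "h \<ge> 4"
  defines "G \<equiv> hier_prod (cycle_graph w) {cc a w 0, cc a w (w-1)} (cycle_graph h)"
  defines "S \<equiv> ({cc a w 0} \<times> ({1..h} - {2,3})) \<union> {(cc a w 1, 1), (cc a w 1, 2)}"
  shows "zero_forcing_set G S"
proof -
  let ?c = "cc a w"
  let ?F = "filled G S"
  let ?U = "{cc a w 0, cc a w (w-1)}"
  have S0: "(?c 0, y) \<in> ?F" if "y \<in> {1..h}" "y \<noteq> 2" "y \<noteq> 3" for y
    using that by (auto simp: S_def intro: filled.init)
  have row: "\<forall>x\<in>{1..w}. (x, y) \<in> ?F" if y: "y \<in> {1..h}" and f0: "(?c 0, y) \<in> ?F" and f1: "(?c 1, y) \<in> ?F" for y
  proof -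
    have P: "\<forall>k'\<le>k. (?c k', y) \<in> ?F" if "k < w" for k
      using that
    proof (induction k)
      case 0 then show ?case using f0 by auto
    next
      case (Suc k)
      have IH: "\<forall>k'\<le>k. (?c k', y) \<in> ?F" using Suc by simp
      show ?case
      proof (cases "k = 0")
        case True then show ?thesis using IH f1 by (auto simp: le_Suc_eq)
      next
        case False
        have k: "0 < k" "k < w - 1" using False Suc.prems by auto
        have nU: "?c k \<notin> ?U" using cc_neq[OF a w k] by auto
        have new: "(?c (Suc k), y) \<in> ?F"
        proof (rule forceP[of "(?c k, y)"])
          show "(?c k, y) \<in> ?F" using IH by simp
          show "adj G (?c k, y) (?c (Suc k), y)"
            unfolding G_def adjH using cadj_mid[OF k] cc_in[OF a, of k] cc_in[OF a, of "Suc k"] k y by auto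
          fix x' y' assume ad: "adj G (?c k, y) (x', y')" and ne: "(x', y') \<noteq> (?c (Suc k), y)"
          from ad nU have "y' = y \<and> adj (cycle_graph w) (?c k) x'"
            unfolding G_def adjH by auto
          hence "y' = y" "x' = ?c (k-1) \<or> x' = ?c (k+1)" using cadj_mid[OF k] by auto
          thus "(x', y') \<in> ?F" using ne IH by auto
        qed
        show ?thesis using IH new by (auto simp: le_Suc_eq)
      qed
    qed
    show ?thesis
    proof
      fix x assume "x \<in> {1..w}"
      then obtain k where "k < w" "x = ?c k" using cc_surj[OF a] by blast
      thus "(x, y) \<in> ?F" using P[of k] by auto
    qed
  qed
  have c0U: "?c 0 \<in> ?U" and clU: "?c (w-1) \<in> ?U" by auto
  have cin: "?c k \<in> {1..w}" if "k < w" for k using cc_in[OF a] that by auto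
  have hadj: "adj (cycle_graph h) y y' \<longleftrightarrow> y' \<in> {1..h} \<and> (y' = nx h y \<or> y' = pv h y)" if "y \<in> {1..h}" for y y'
    using that adjC2 by auto
  have nb0: "(x' = ?c 0 \<and> y' \<in> {1..h} \<and> (y' = nx h y \<or> y' = pv h y)) \<or> (y' = y \<and> (x' = ?c 1 \<or> x' = ?c (w-1)))"
    if "adj G (?c 0, y) (x', y')" for x' y' y
    using that unfolding G_def adjH cadj_0 using adjC2 by auto
  have nbl: "(x' = ?c (w-1) \<and> y' \<in> {1..h} \<and> (y' = nx h y \<or> y' = pv h y)) \<or> (y' = y \<and> x' \<in> {1..w})"
    if "adj G (?c (w-1), y) (x', y')" for x' y' y
    using that unfolding G_def adjH using adjC2 by auto
  have vadj: "adj G (x, y) (x, y')" if "x \<in> ?U" "x \<in> {1..w}" "y \<in> {1..h}" "y' \<in> {1..h}" "y' = nx h y \<or> y' = pv h y" for x y y'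
    using that unfolding G_def adjH adjC2 by auto
  have w1: "w - 1 < w" "1 < w" "0 < w" using w by auto
  have R1: "\<forall>x\<in>{1..w}. (x, 1) \<in> ?F"
    using row[of 1] S0[of 1] h by (auto simp: S_def intro: filled.init)
  have f02: "(?c 0, 2) \<in> ?F"
  proof (rule forceP[of "(?c 0, 1)"])
    show "(?c 0, 1) \<in> ?F" using S0[of 1] h by auto
    show "adj G (?c 0, 1) (?c 0, 2)" using vadj[of "?c 0" 1 2] cin[of 0] h w by (auto simp: nx_def)
    fix x' y' assume ad: "adj G (?c 0, 1) (x', y')" and ne: "(x', y') \<noteq> (?c 0, 2)"
    from nb0[OF ad] show "(x', y') \<in> ?F"
    proof
      assume "x' = ?c 0 \<and> y' \<in> {1..h} \<and> (y' = nx h 1 \<or> y' = pv h 1)"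
      thus ?thesis using ne S0[of h] h by (auto simp: nx_def pv_def)
    next
      assume "y' = 1 \<and> (x' = ?c 1 \<or> x' = ?c (w-1))"
      thus ?thesis using R1 cin w1 by auto
    qed
  qed
  have R2: "\<forall>x\<in>{1..w}. (x, 2) \<in> ?F"
    using row[of 2] f02 h by (auto simp: S_def intro: filled.init)
  have main: "\<forall>y'\<le>y. y' \<in> {1..h} \<longrightarrow> (\<forall>x\<in>{1..w}. (x, y') \<in> ?F)" for y
  proof (induction y)
    case 0 then show ?case by auto
  next
    case (Suc y)
    have IH: "\<forall>y'\<le>y. y' \<in> {1..h} \<longrightarrow> (\<forall>x\<in>{1..w}. (x, y') \<in> ?F)" using Suc by simp
    have new: "\<forall>x\<in>{1..w}. (x, Suc y) \<in> ?F" if Y: "Suc y \<in> {1..h}"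
    proof (cases "Suc y \<le> 2")
      case True
      then have "Suc y = 1 \<or> Suc y = 2" using Y by auto
      then show ?thesis
      proof
        assume e: "Suc y = 1" show ?thesis unfolding e using R1 .
      next
        assume e: "Suc y = 2" show ?thesis unfolding e using R2 .
      qed
    next
      case False
      have Ry: "\<forall>x\<in>{1..w}. (x, y) \<in> ?F" using IH False Y by auto
      have Ry1: "\<forall>x\<in>{1..w}. (x, y - 1) \<in> ?F" using IH False Y by auto
      have F0: "(?c 0, Suc y) \<in> ?F"
      proof (cases "Suc y = 3")
        case False2: False
        then show ?thesis using S0[of "Suc y"] Y False by auto
      next
        case True
        hence y2: "y = 2" by simp
        show ?thesis
        proof (rule forceP[of "(?c 0, 2)"])
          show "(?c 0, 2) \<in> ?F" using f02 .
          show "adj G (?c 0, 2) (?c 0, Suc y)" using vadj[of "?c 0" 2 3] cin[of 0] h w y2 by (auto simp: nx_def)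
          fix x' y' assume ad: "adj G (?c 0, 2) (x', y')" and ne: "(x', y') \<noteq> (?c 0, Suc y)"
          from nb0[OF ad] show "(x', y') \<in> ?F"
          proof
            assume "x' = ?c 0 \<and> y' \<in> {1..h} \<and> (y' = nx h 2 \<or> y' = pv h 2)"
            thus ?thesis using ne R1 cin[of 0] w1 h y2 by (auto simp: nx_def pv_def)
          next
            assume "y' = 2 \<and> (x' = ?c 1 \<or> x' = ?c (w-1))"
            thus ?thesis using R2 cin w1 by auto
          qed
        qed
      qed
      have Fl: "(?c (w-1), Suc y) \<in> ?F"
      proof (rule forceP[of "(?c (w-1), y)"])
        show "(?c (w-1), y) \<in> ?F" using Ry cin w1 by auto
        show "adj G (?c (w-1), y) (?c (w-1), Suc y)" using vadj[of "?c (w-1)" y "Suc y"] cin[of "w-1"] w1 Y False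
          by (auto simp: nx_def)
        fix x' y' assume ad: "adj G (?c (w-1), y) (x', y')" and ne: "(x', y') \<noteq> (?c (w-1), Suc y)"
        from nbl[OF ad] show "(x', y') \<in> ?F"
        proof
          assume "x' = ?c (w-1) \<and> y' \<in> {1..h} \<and> (y' = nx h y \<or> y' = pv h y)"
          thus ?thesis using ne Ry1 cin w1 Y False by (auto simp: nx_def pv_def split: if_splits)
        next
          assume "y' = y \<and> x' \<in> {1..w}"
          thus ?thesis using Ry by auto
        qed
      qed
      have F1: "(?c 1, Suc y) \<in> ?F"
      proof (rule forceP[of "(?c 0, Suc y)"])
        show "(?c 0, Suc y) \<in> ?F" using F0 .
        show "adj G (?c 0, Suc y) (?c 1, Suc y)" unfolding G_def adjH cadj_0 using cin w1 Y by auto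
        fix x' y' assume ad: "adj G (?c 0, Suc y) (x', y')" and ne: "(x', y') \<noteq> (?c 1, Suc y)"
        from nb0[OF ad] show "(x', y') \<in> ?F"
        proof
          assume A: "x' = ?c 0 \<and> y' \<in> {1..h} \<and> (y' = nx h (Suc y) \<or> y' = pv h (Suc y))"
          show ?thesis
          proof (cases "y' = pv h (Suc y)")
            case True
            then have "y' = y" using False by (simp add: pv_def)
            then show ?thesis using A Ry cin w1 by auto
          next
            case False3: False
            then have "y' = nx h (Suc y)" using A by auto
            then have "y' = 1 \<or> (y' \<ge> 4 \<and> y' \<le> h)" using Y False by (auto simp: nx_def)
            then show ?thesis using A R1 S0[of y'] cin w1 by auto
          qed
        next
          assume "y' = Suc y \<and> (x' = ?c 1 \<or> x' = ?c (w-1))"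
          thus ?thesis using ne Fl by auto
        qed
      qed
      show ?thesis using row[OF Y F0 F1] .
    qed
    show ?case using IH new by (auto simp: le_Suc_eq)
  qed
  show ?thesis unfolding zero_forcing_set_def
  proof
    show "S \<subseteq> verts G" unfolding S_def G_def using cin[of 0] cin[of 1] w h by auto
    show "verts G \<subseteq> ?F"
    proof
      fix v assume "v \<in> verts G"
      then obtain x y where v: "v = (x,y)" "x \<in> {1..w}" "y \<in> {1..h}" unfolding G_def by auto
      thus "v \<in> ?F" using main[of y] by auto
    qed
  qed
qed

end

lemma adj_bound:
  assumes a: "a \<in> {1..w}" and w: "w \<ge> 4" and h: "h \<ge> 4"
  shows "zero_forcing_number (hier_prod (cycle_graph w) {a, nx w a} (cycle_graph h)) \<le> h"
proof -
  let ?S = "({cc a w 0} \<times> ({1..h} - {2,3})) \<union> {(cc a w 1, 1::nat), (cc a w 1, 2)}"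
  have U: "{a, nx w a} = {cc a w 0, cc a w (w-1)}" using cc_0[OF a] cc_last[OF a] w by simp
  have z: "zero_forcing_set (hier_prod (cycle_graph w) {a, nx w a} (cycle_graph h)) ?S"
    unfolding U using adj_case[OF a w h] by simp
  have "card ?S \<le> card ({cc a w 0} \<times> ({1..h} - {2,3})) + card {(cc a w 1, 1::nat), (cc a w 1, 2)}"
    by (rule card_Un_le)
  also have "card ({cc a w 0} \<times> ({1..h} - {2,3::nat})) = h - 2"
    using h by (simp add: card_cartesian_product card_Diff_subset)
  also have "card {(cc a w 1, 1::nat), (cc a w 1, 2)} \<le> 2" by (simp add: card_insert_le_m1)
  finally have "card ?S \<le> h" using h by linarith
  moreover have "finite (verts (hier_prod (cycle_graph w) {a, nx w a} (cycle_graph h)))" by simp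
  ultimately show ?thesis using zfn_le[OF z] by linarith
qed

lemma gen_bound:
  assumes a: "a \<in> {1..w}" and w: "w \<ge> 4"
  shows "zero_forcing_number (hier_prod (cycle_graph w) U (cycle_graph h)) \<le> 2 * h"
proof -
  let ?S = "{cc a w 0, cc a w 1} \<times> {1..h}"
  have z: "zero_forcing_set (hier_prod (cycle_graph w) U (cycle_graph h)) ?S"
    using two_cols[OF a w] by simp
  have "card {cc a w 0, cc a w 1} \<le> 2" by (simp add: card_insert_le_m1)
  hence "card ?S \<le> 2 * h" by (simp add: card_cartesian_product)
  moreover have "finite (verts (hier_prod (cycle_graph w) U (cycle_graph h)))" by simp
  ultimately show ?thesis using zfn_le[OF z] by linarith
qed

theorem mainTheorem5:
  fixes h w i j :: nat
  assumes "h \<ge> 4" and "w \<ge> 4"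
    and "i \<in> {1..w}" and "j \<in> {1..w}" and "i \<noteq> j"
  shows "(adj (cycle_graph w) i j \<longrightarrow>
            zero_forcing_number (hier_prod (cycle_graph w) {i, j} (cycle_graph h)) \<le> h)
       \<and> (\<not> adj (cycle_graph w) i j \<longrightarrow>
            zero_forcing_number (hier_prod (cycle_graph w) {i, j} (cycle_graph h)) \<le> 2 * h)"
proof (intro conjI impI)
  show "zero_forcing_number (hier_prod (cycle_graph w) {i, j} (cycle_graph h)) \<le> 2 * h"
    using gen_bound[OF assms(3,2)] by simp
next
  assume "adj (cycle_graph w) i j"
  hence "j = nx w i \<or> j = pv w i" unfolding adjC2 by auto
  thus "zero_forcing_number (hier_prod (cycle_graph w) {i, j} (cycle_graph h)) \<le> h"
  proof
    assume "j = nx w i"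
    thus ?thesis using adj_bound[OF assms(3,2,1)] by simp
  next
    assume "j = pv w i"
    hence "i = nx w j" using nx_pv assms(3) by simp
    hence "{i, j} = {j, nx w j}" by auto
    thus ?thesis using adj_bound[OF assms(4,2,1)] by simp
  qed
qed

end
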